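(* Let $t_i=i^\alpha$ for $i\ge1$ with $0<\alpha\le1/3$, and let $n(t)=\#\{k\ge1: t_k\le t\}=[t^{1/\alpha}]$ for $t\ge 0$. Let $M\ge1$ be an integer and write \[ I_M(u)=u^3\int_0^{t_M}\frac{n(t)}{t^2(t^2+u^2+ut\sqrt2)}\,dt . \] (i) There is a constant $C>0$ depending only on $\alpha$ such that if $u\ge t_M$, then $I_M(u)\ge Cu(M^{1-\alpha}-1)$. (ii) If $0<\alpha<1/3$, there is a constant $C>0$ depending only on $\alpha$ such that for $0\le u\le t_M$, \[ I_M(u)\ge C\left[\frac{u^{1/\alpha}-u}{1-\alpha}+u^3\,\frac{M^{1-3\alpha}-\max(u,1)^{1/\alpha-3}}{1-3\alpha}\right]. \] (iii) If $\alpha=1/3$, there is a constant $C>0$ such that for $0\le u\le t_M$, \[ I_M(u)\ge Cu^3\log\frac{t_M}{\max(u,1)}. \]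
   Context: $[\cdot]$ denotes the integer part. The constants do not depend on $M$ or $u$. *)

theory Defs
  imports "HOL-Analysis.Analysis"
begin

definition tseq :: "real \<Rightarrow> nat \<Rightarrow> real" where
  "tseq \<alpha> i = real i powr \<alpha>"

definition ncount :: "real \<Rightarrow> real \<Rightarrow> nat" where
  "ncount \<alpha> t = card {k::nat. 1 \<le> k \<and> tseq \<alpha> k \<le> t}"

definition IM :: "real \<Rightarrow> nat \<Rightarrow> real \<Rightarrow> real" where
  "IM \<alpha> M u = u ^ 3 * integral {0..tseq \<alpha> M}
      (\<lambda>t. real (ncount \<alpha> t) / (t ^ 2 * (t ^ 2 + u ^ 2 + u * t * sqrt 2)))"

end

theory Submission
  imports Defs
begin

lemma powr_le_iff_base:
  "0 \<le> (x::real) \<Longrightarrow> 0 \<le> y \<Longrightarrow> 0 < a \<Longrightarrow> (x \<le> y) = (x powr a \<le> y powr a)"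
  by (metis leD leI less_eq_real_def powr_less_mono2)

lemma tseq_le_iff:
  assumes "0 < \<alpha>" "0 \<le> t"
  shows "tseq \<alpha> k \<le> t \<longleftrightarrow> real k \<le> t powr (1/\<alpha>)"
proof -
  have "tseq \<alpha> k \<le> t \<longleftrightarrow> (real k powr \<alpha>) powr (1/\<alpha>) \<le> t powr (1/\<alpha>)"
    unfolding tseq_def using assms by (intro powr_le_iff_base) auto
  also have "(real k powr \<alpha>) powr (1/\<alpha>) = real k"
    using assms by (simp add: powr_powr)
  finally show ?thesis .
qed

lemma ncount_ge:
  assumes "0 < \<alpha>" "1 \<le> t"
  shows "real (ncount \<alpha> t) \<ge> t powr (1/\<alpha>) / 2"
proof -
  define x where "x = t powr (1/\<alpha>)"
  have x1: "x \<ge> 1" unfolding x_def using assms by (simp add: ge_one_powr_ge_zero)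
  have sub: "{1..nat \<lfloor>x\<rfloor>} \<subseteq> {k::nat. 1 \<le> k \<and> tseq \<alpha> k \<le> t}"
  proof
    fix k assume "k \<in> {1..nat \<lfloor>x\<rfloor>}"
    then have "1 \<le> k" "k \<le> nat \<lfloor>x\<rfloor>" by auto
    moreover from this(2) have "real k \<le> x" using x1 by linarith
    ultimately show "k \<in> {k::nat. 1 \<le> k \<and> tseq \<alpha> k \<le> t}"
      using tseq_le_iff[OF assms(1), of t k] assms x_def by auto
  qed
  have fin: "finite {k::nat. 1 \<le> k \<and> tseq \<alpha> k \<le> t}"
  proof (rule finite_subset[of _ "{..nat \<lfloor>x\<rfloor>}"])
    show "{k::nat. 1 \<le> k \<and> tseq \<alpha> k \<le> t} \<subseteq> {..nat \<lfloor>x\<rfloor>}"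
    proof
      fix k assume "k \<in> {k::nat. 1 \<le> k \<and> tseq \<alpha> k \<le> t}"
      then have "real k \<le> x" using tseq_le_iff[OF assms(1), of t k] assms x_def by auto
      then show "k \<in> {..nat \<lfloor>x\<rfloor>}" by (simp add: le_nat_floor)
    qed
  qed auto
  have "nat \<lfloor>x\<rfloor> \<le> ncount \<alpha> t"
    unfolding ncount_def using card_mono[OF fin sub] by simp
  moreover have "x / 2 \<le> real (nat \<lfloor>x\<rfloor>)"
  proof -
    have "1 \<le> \<lfloor>x\<rfloor>" using x1 by simp
    then have "real (nat \<lfloor>x\<rfloor>) = real_of_int \<lfloor>x\<rfloor>" by simp
    then show ?thesis using x1 floor_correct[of x] \<open>1 \<le> \<lfloor>x\<rfloor>\<close> by linarith
  qed
  ultimately show ?thesis unfolding x_def by linarith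
qed

lemma ncount_sum:
  assumes "0 < \<alpha>" "0 \<le> t" "t \<le> tseq \<alpha> M"
  shows "real (ncount \<alpha> t) = (\<Sum>k\<in>{1..M}. if tseq \<alpha> k \<le> t then 1 else 0)"
proof -
  have "{k::nat. 1 \<le> k \<and> tseq \<alpha> k \<le> t} = {k\<in>{1..M}. tseq \<alpha> k \<le> t}"
  proof -
    have "k \<le> M" if "tseq \<alpha> k \<le> t" for k
    proof -
      have "real k powr \<alpha> \<le> real M powr \<alpha>" using that assms unfolding tseq_def by linarith
      then show ?thesis using assms(1) powr_le_iff_base[of "real k" "real M" \<alpha>] by simp
    qed
    then show ?thesis by auto
  qed
  moreover have "{k\<in>{1..M}. tseq \<alpha> k \<le> t} = {1..M} \<inter> {k. tseq \<alpha> k \<le> t}" by auto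
    ultimately show ?thesis unfolding ncount_def by (simp add: sum.If_cases)
qed

definition gf :: "real \<Rightarrow> real \<Rightarrow> real \<Rightarrow> real" where
  "gf \<alpha> u t = real (ncount \<alpha> t) / (t ^ 2 * (t ^ 2 + u ^ 2 + u * t * sqrt 2))"

lemma IM_gf: "IM \<alpha> M u = u ^ 3 * integral {0..tseq \<alpha> M} (gf \<alpha> u)"
  unfolding IM_def gf_def by simp

lemma tseq_ge1: "0 < \<alpha> \<Longrightarrow> 1 \<le> k \<Longrightarrow> 1 \<le> tseq \<alpha> k"
  unfolding tseq_def by (simp add: ge_one_powr_ge_zero)

lemma gf_nonneg: "0 \<le> u \<Longrightarrow> 0 \<le> t \<Longrightarrow> 0 \<le> gf \<alpha> u t"
  unfolding gf_def by (intro divide_nonneg_nonneg mult_nonneg_nonneg) auto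

lemma gf_integrable:
  assumes "0 < \<alpha>" "0 \<le> u"
  shows "gf \<alpha> u integrable_on {0..tseq \<alpha> M}"
proof -
  define g where "g t = 1 / (t ^ 2 * (t ^ 2 + u ^ 2 + u * t * sqrt 2))" for t
  have int1: "(\<lambda>t. if t \<in> {tseq \<alpha> k..tseq \<alpha> M} then g t else 0) integrable_on {0..tseq \<alpha> M}"
    if k: "k \<in> {1..M}" for k
  proof -
    have t1: "1 \<le> tseq \<alpha> k" using tseq_ge1[OF assms(1)] k by auto
    have "continuous_on {tseq \<alpha> k..tseq \<alpha> M} g"
    proof -
      have "t ^ 2 * (t ^ 2 + u ^ 2 + u * t * sqrt 2) \<noteq> 0" if "t \<in> {tseq \<alpha> k..tseq \<alpha> M}" for t
      proof -
        have "0 < t" using that t1 by auto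
        then have "0 < t ^ 2 * (t ^ 2 + u ^ 2 + u * t * sqrt 2)" using assms
          by (intro mult_pos_pos add_pos_nonneg) auto
        then show ?thesis by (metis less_irrefl)
      qed
      then show ?thesis unfolding g_def by (intro continuous_intros) auto
    qed
    then have "g integrable_on {tseq \<alpha> k..tseq \<alpha> M}" by (rule integrable_continuous_interval)
    then obtain i where "(g has_integral i) {tseq \<alpha> k..tseq \<alpha> M}" by (auto simp: integrable_on_def)
    moreover have "{tseq \<alpha> k..tseq \<alpha> M} \<subseteq> {0..tseq \<alpha> M}" using t1 by auto
    ultimately show ?thesis using has_integral_restrict unfolding integrable_on_def by blast
  qed
  have "(\<lambda>t. \<Sum>k\<in>{1..M}. if t \<in> {tseq \<alpha> k..tseq \<alpha> M} then g t else 0) integrable_on {0..tseq \<alpha> M}"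
    by (rule integrable_sum) (use int1 in auto)
  then show ?thesis
  proof (rule integrable_eq)
    fix t assume t: "t \<in> {0..tseq \<alpha> M}"
    have "gf \<alpha> u t = real (ncount \<alpha> t) * g t" unfolding gf_def g_def by simp
    also have "\<dots> = (\<Sum>k\<in>{1..M}. if tseq \<alpha> k \<le> t then 1 else 0) * g t"
      using ncount_sum[OF assms(1), of t M] t by simp
    also have "\<dots> = (\<Sum>k\<in>{1..M}. if t \<in> {tseq \<alpha> k..tseq \<alpha> M} then g t else 0)"
      unfolding sum_distrib_right using t by (intro sum.cong) auto
    finally show "(\<Sum>k\<in>{1..M}. if t \<in> {tseq \<alpha> k..tseq \<alpha> M} then g t else 0) = gf \<alpha> u t" by simp
  qed
qed

lemma integral_sub_le:
  assumes "0 < \<alpha>" "0 \<le> u" "0 \<le> a" "a \<le> b" "b \<le> c" "c \<le> tseq \<alpha> M"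
  shows "integral {a..b} (gf \<alpha> u) + integral {b..c} (gf \<alpha> u) \<le> integral {0..tseq \<alpha> M} (gf \<alpha> u)"
proof -
  have I: "gf \<alpha> u integrable_on {0..tseq \<alpha> M}" by (rule gf_integrable[OF assms(1,2)])
  have Iac: "gf \<alpha> u integrable_on {a..c}"
    by (rule integrable_on_subinterval[OF I]) (use assms in auto)
  have "integral {a..b} (gf \<alpha> u) + integral {b..c} (gf \<alpha> u) = integral {a..c} (gf \<alpha> u)"
    using Henstock_Kurzweil_Integration.integral_combine[where f="gf \<alpha> u" and a=a and c=b and b=c] assms Iac by simp
  also have "\<dots> \<le> integral {0..tseq \<alpha> M} (gf \<alpha> u)"
    by (rule integral_subset_le) (use assms I Iac gf_nonneg in auto)
  finally show ?thesis .
qed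

lemma integral_lb:
  assumes "0 < \<alpha>" "0 \<le> u" "0 \<le> a" "a \<le> b" "b \<le> tseq \<alpha> M"
    and h: "\<And>t. t \<in> {a..b} \<Longrightarrow> c * t powr p \<le> gf \<alpha> u t"
    and J: "((\<lambda>t. t powr p) has_integral J) {a..b}"
  shows "c * J \<le> integral {a..b} (gf \<alpha> u)"
proof -
  have I: "gf \<alpha> u integrable_on {a..b}"
    by (rule integrable_on_subinterval[OF gf_integrable[OF assms(1,2)]]) (use assms in auto)
  have "((\<lambda>t. c * t powr p) has_integral c * J) {a..b}" by (rule has_integral_mult_right[OF J])
  then show ?thesis using has_integral_le[OF _ integrable_integral[OF I] h] by blast
qed

lemma powr_has_integral:
  fixes a b p :: real
  assumes "0 < a" "a \<le> b" "p \<noteq> -1"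
  shows "((\<lambda>t. t powr p) has_integral ((b powr (p+1) - a powr (p+1)) / (p+1))) {a..b}"
proof -
  have "((\<lambda>t. t powr p) has_integral ((\<lambda>t. t powr (p+1) / (p+1)) b - (\<lambda>t. t powr (p+1) / (p+1)) a)) {a..b}"
  proof (rule fundamental_theorem_of_calculus[OF assms(2)])
    fix x assume x: "x \<in> {a..b}"
    then have "0 < x" using assms by auto
    have "((\<lambda>t. t powr (p+1) / (p+1)) has_real_derivative ((p+1) * x powr (p+1-1)) / (p+1)) (at x)"
      by (intro DERIV_cdivide has_real_derivative_powr \<open>0 < x\<close>)
    then have "((\<lambda>t. t powr (p+1) / (p+1)) has_real_derivative x powr p) (at x)"
      using assms(3) by simp
    then show "((\<lambda>t. t powr (p+1) / (p+1)) has_vector_derivative x powr p) (at x within {a..b})"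
      using has_real_derivative_iff_has_vector_derivative has_vector_derivative_at_within by blast
  qed
  then show ?thesis by (simp add: diff_divide_distrib)
qed

lemma powr_m1_has_integral:
  fixes a b :: real
  assumes "0 < a" "a \<le> b"
  shows "((\<lambda>t. t powr (-1)) has_integral (ln b - ln a)) {a..b}"
proof (rule fundamental_theorem_of_calculus[OF assms(2)])
  fix x assume x: "x \<in> {a..b}"
  then have "0 < x" using assms by auto
  have "(ln has_real_derivative 1 / x) (at x)" using \<open>0 < x\<close> by (auto intro!: derivative_eq_intros)
  then have "(ln has_real_derivative x powr (-1)) (at x)" using \<open>0 < x\<close> by (simp add: powr_minus_divide)
  then show "(ln has_vector_derivative x powr (-1)) (at x within {a..b})"
    using has_real_derivative_iff_has_vector_derivative has_vector_derivative_at_within by blast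
qed


lemma gf_lb_gen:
  assumes "0 < \<alpha>" "1 \<le> t" "0 \<le> u" "t ^ 2 + u ^ 2 + u * t * sqrt 2 \<le> E"
  shows "t powr (1/\<alpha>) / (2 * t ^ 2 * E) \<le> gf \<alpha> u t"
proof -
  define D where "D = t ^ 2 + u ^ 2 + u * t * sqrt 2"
  have Dp: "0 < D" unfolding D_def using assms by (intro add_pos_nonneg) auto
  have "t powr (1/\<alpha>) / (2 * t ^ 2 * E) = (t powr (1/\<alpha>) / 2) / (t ^ 2 * E)" by simp
  also have "\<dots> \<le> (t powr (1/\<alpha>) / 2) / (t ^ 2 * D)"
    using Dp assms by (intro divide_left_mono mult_left_mono mult_pos_pos) (auto simp: D_def)
  also have "\<dots> \<le> real (ncount \<alpha> t) / (t ^ 2 * D)"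
    using Dp assms ncount_ge[OF assms(1,2)] by (intro divide_right_mono) auto
  finally show ?thesis unfolding gf_def D_def .
qed

lemma powr_sub2: "0 < (t::real) \<Longrightarrow> t powr (q - 2) = t powr q / t ^ 2"
  by (simp add: powr_diff powr_numeral)

lemma powr_sub4: "0 < (t::real) \<Longrightarrow> t powr (q - 4) = t powr q / t ^ 4"
  by (simp add: powr_diff powr_numeral)

lemma gf_lb1:
  assumes "0 < \<alpha>" "1 \<le> t" "t \<le> u"
  shows "1 / (8 * u ^ 2) * t powr (1/\<alpha> - 2) \<le> gf \<alpha> u t"
proof -
  have E: "t ^ 2 + u ^ 2 + u * t * sqrt 2 \<le> 4 * u ^ 2"
  proof -
    have "sqrt 2 \<le> 2" by (rule real_le_lsqrt) auto
    have "t ^ 2 \<le> u ^ 2" using assms by (intro power_mono) auto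
    moreover have "u * t * sqrt 2 \<le> u * u * 2"
      using assms \<open>sqrt 2 \<le> 2\<close> by (intro mult_mono) auto
    ultimately show ?thesis by (simp add: power2_eq_square)
  qed
  have "1 / (8 * u ^ 2) * t powr (1/\<alpha> - 2) = t powr (1/\<alpha>) / (2 * t ^ 2 * (4 * u ^ 2))"
    using assms by (simp add: powr_sub2)
  also have "\<dots> \<le> gf \<alpha> u t" using gf_lb_gen[OF assms(1,2) _ E] assms by simp
  finally show ?thesis .
qed

lemma gf_lb2:
  assumes "0 < \<alpha>" "1 \<le> t" "0 \<le> u" "u \<le> t"
  shows "1 / 8 * t powr (1/\<alpha> - 4) \<le> gf \<alpha> u t"
proof -
  have E: "t ^ 2 + u ^ 2 + u * t * sqrt 2 \<le> 4 * t ^ 2"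
  proof -
    have "sqrt 2 \<le> 2" by (rule real_le_lsqrt) auto
    have "u ^ 2 \<le> t ^ 2" using assms by (intro power_mono) auto
    moreover have "u * t * sqrt 2 \<le> t * t * 2"
      using assms \<open>sqrt 2 \<le> 2\<close> by (intro mult_mono) auto
    ultimately show ?thesis by (simp add: power2_eq_square)
  qed
  have "1 / 8 * t powr (1/\<alpha> - 4) = t powr (1/\<alpha>) / (2 * t ^ 2 * (4 * t ^ 2))"
    using assms by (simp add: powr_sub4 power2_eq_square power4_eq_xxxx)
  also have "\<dots> \<le> gf \<alpha> u t" using gf_lb_gen[OF assms(1,2,3) E] .
  finally show ?thesis .
qed


lemma integral_sub_le1:
  assumes "0 < \<alpha>" "0 \<le> u" "0 \<le> a" "a \<le> b" "b \<le> tseq \<alpha> M"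
  shows "integral {a..b} (gf \<alpha> u) \<le> integral {0..tseq \<alpha> M} (gf \<alpha> u)"
proof -
  have I: "gf \<alpha> u integrable_on {0..tseq \<alpha> M}" by (rule gf_integrable[OF assms(1,2)])
  have Iab: "gf \<alpha> u integrable_on {a..b}"
    by (rule integrable_on_subinterval[OF I]) (use assms in auto)
  show ?thesis
    by (rule integral_subset_le) (use assms I Iab gf_nonneg in auto)
qed

lemma tseq_powr: "0 < \<alpha> \<Longrightarrow> tseq \<alpha> M powr (1/\<alpha> - q) = real M powr (1 - q * \<alpha>)"
  unfolding tseq_def by (simp add: powr_powr algebra_simps)

lemma part1:
  assumes "0 < \<alpha>" "\<alpha> \<le> 1/3"
  shows "\<exists>C>0. \<forall>M::nat. \<forall>u::real. 1 \<le> M \<longrightarrow> tseq \<alpha> M \<le> u \<longrightarrow>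
            IM \<alpha> M u \<ge> C * u * (real M powr (1 - \<alpha>) - 1)"
proof (intro exI[of _ "\<alpha> / (8 * (1 - \<alpha>))"] conjI allI impI)
  show "0 < \<alpha> / (8 * (1 - \<alpha>))" using assms by auto
  fix M :: nat and u :: real
  assume M: "1 \<le> M" and u: "tseq \<alpha> M \<le> u"
  define T where "T = tseq \<alpha> M"
  have T1: "1 \<le> T" unfolding T_def using tseq_ge1[OF assms(1) M] .
  have up: "0 < u" using T1 u T_def by auto
  have ne: "1/\<alpha> - 2 \<noteq> -1" using assms by (auto simp: field_simps)
  have J: "((\<lambda>t. t powr (1/\<alpha> - 2)) has_integral ((T powr (1/\<alpha> - 2 + 1) - 1 powr (1/\<alpha> - 2 + 1)) / (1/\<alpha> - 2 + 1))) {1..T}"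
    by (rule powr_has_integral[OF _ T1 ne]) simp
  have e1: "T powr (1/\<alpha> - 2 + 1) = real M powr (1 - \<alpha>)"
    using tseq_powr[OF assms(1), of M 1] unfolding T_def by simp
  have lb: "1 / (8 * u ^ 2) * ((real M powr (1 - \<alpha>) - 1) / (1/\<alpha> - 1)) \<le> integral {1..T} (gf \<alpha> u)"
  proof -
    have "1 / (8 * u ^ 2) * ((T powr (1/\<alpha> - 2 + 1) - 1 powr (1/\<alpha> - 2 + 1)) / (1/\<alpha> - 2 + 1)) \<le> integral {1..T} (gf \<alpha> u)"
      by (rule integral_lb[OF assms(1) _ _ T1 _ _ J]) (use up T1 T_def u gf_lb1[OF assms(1)] in auto)
    then show ?thesis using e1 by simp
  qed
  also have "\<dots> \<le> integral {0..T} (gf \<alpha> u)"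
    using integral_sub_le1[OF assms(1), of u 1 T M] up T1 T_def by auto
  finally have "u ^ 3 * (1 / (8 * u ^ 2) * ((real M powr (1 - \<alpha>) - 1) / (1/\<alpha> - 1))) \<le> IM \<alpha> M u"
    unfolding IM_gf T_def using up by (intro mult_left_mono) auto
  moreover have "u ^ 3 * (1 / (8 * u ^ 2) * ((real M powr (1 - \<alpha>) - 1) / (1/\<alpha> - 1)))
      = \<alpha> / (8 * (1 - \<alpha>)) * u * (real M powr (1 - \<alpha>) - 1)"
    using up assms by (simp add: field_simps power2_eq_square power3_eq_cube)
  ultimately show "\<alpha> / (8 * (1 - \<alpha>)) * u * (real M powr (1 - \<alpha>) - 1) \<le> IM \<alpha> M u" by simp
qed


lemma part2:
  assumes "0 < \<alpha>" "\<alpha> < 1/3"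
  shows "\<exists>C>0. \<forall>M::nat. \<forall>u::real. 1 \<le> M \<longrightarrow> 0 \<le> u \<longrightarrow> u \<le> tseq \<alpha> M \<longrightarrow>
            IM \<alpha> M u \<ge> C * ((u powr (1/\<alpha>) - u) / (1 - \<alpha>)
              + u ^ 3 * (real M powr (1 - 3*\<alpha>) - max u 1 powr (1/\<alpha> - 3)) / (1 - 3*\<alpha>))"
proof (intro exI[of _ "\<alpha> / 8"] conjI allI impI)
  show "0 < \<alpha> / 8" using assms by auto
  fix M :: nat and u :: real
  assume M: "1 \<le> M" and u0: "0 \<le> u" and uT: "u \<le> tseq \<alpha> M"
  define T where "T = tseq \<alpha> M"
  have T1: "1 \<le> T" unfolding T_def using tseq_ge1[OF assms(1) M] .
  have ne4: "1/\<alpha> - 4 \<noteq> -1" using assms by (auto simp: field_simps)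
  have ne2: "1/\<alpha> - 2 \<noteq> -1" using assms by (auto simp: field_simps)
  have eT: "T powr (1/\<alpha> - 4 + 1) = real M powr (1 - 3 * \<alpha>)"
    using tseq_powr[OF assms(1), of M 3] unfolding T_def by simp
  have k3: "1 / (1/\<alpha> - 3) = \<alpha> / (1 - 3 * \<alpha>)" using assms by (simp add: field_simps)
  have k1: "1 / (1/\<alpha> - 1) = \<alpha> / (1 - \<alpha>)" using assms by (simp add: field_simps)
  show "\<alpha> / 8 * ((u powr (1/\<alpha>) - u) / (1 - \<alpha>)
              + u ^ 3 * (real M powr (1 - 3*\<alpha>) - max u 1 powr (1/\<alpha> - 3)) / (1 - 3*\<alpha>)) \<le> IM \<alpha> M u"
  proof (cases "u \<le> 1")
    case True
    have J: "((\<lambda>t. t powr (1/\<alpha> - 4)) has_integral ((T powr (1/\<alpha> - 4 + 1) - 1 powr (1/\<alpha> - 4 + 1)) / (1/\<alpha> - 4 + 1))) {1..T}"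
      by (rule powr_has_integral[OF _ T1 ne4]) simp
    have "1 / 8 * ((T powr (1/\<alpha> - 4 + 1) - 1 powr (1/\<alpha> - 4 + 1)) / (1/\<alpha> - 4 + 1)) \<le> integral {1..T} (gf \<alpha> u)"
      by (rule integral_lb[OF assms(1) u0 _ T1 _ _ J]) (use True u0 T1 T_def gf_lb2[OF assms(1)] in auto)
    also have "\<dots> \<le> integral {0..T} (gf \<alpha> u)"
      using integral_sub_le1[OF assms(1) u0, of 1 T M] T1 T_def by auto
    finally have "1 / 8 * ((real M powr (1 - 3 * \<alpha>) - 1) / (1/\<alpha> - 3)) \<le> integral {0..T} (gf \<alpha> u)"
      using eT by simp
    then have "u ^ 3 * (1 / 8 * ((real M powr (1 - 3 * \<alpha>) - 1) / (1/\<alpha> - 3))) \<le> IM \<alpha> M u"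
      unfolding IM_gf T_def using u0 by (intro mult_left_mono) auto
    moreover have "u ^ 3 * (1 / 8 * ((real M powr (1 - 3 * \<alpha>) - 1) / (1/\<alpha> - 3)))
        = \<alpha> / 8 * (u ^ 3 * (real M powr (1 - 3*\<alpha>) - 1) / (1 - 3*\<alpha>))"
    proof -
      have "\<alpha> \<noteq> 0" "8 - \<alpha> * 24 \<noteq> 0" "1 - \<alpha> * 3 \<noteq> 0" using assms by auto
      then show ?thesis by (simp add: field_simps)
    qed
    moreover have "u powr (1/\<alpha>) \<le> u"
    proof (cases "u = 0")
      case False
      then have "u powr (1/\<alpha>) \<le> u powr 1" using True u0 assms by (intro powr_mono') auto
      then show ?thesis using u0 False by simp
    qed simp
    moreover have "max u 1 = 1" using True by simp
    ultimately show ?thesis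
    proof -
      assume h1: "u ^ 3 * (1 / 8 * ((real M powr (1 - 3 * \<alpha>) - 1) / (1/\<alpha> - 3))) \<le> IM \<alpha> M u"
        and h2: "u ^ 3 * (1 / 8 * ((real M powr (1 - 3 * \<alpha>) - 1) / (1/\<alpha> - 3)))
        = \<alpha> / 8 * (u ^ 3 * (real M powr (1 - 3*\<alpha>) - 1) / (1 - 3*\<alpha>))"
        and h3: "u powr (1/\<alpha>) \<le> u" and h4: "max u 1 = 1"
      have "(u powr (1/\<alpha>) - u) / (1 - \<alpha>) \<le> 0" using h3 assms by (intro divide_nonpos_pos) auto
      then have "\<alpha> / 8 * ((u powr (1/\<alpha>) - u) / (1 - \<alpha>)) \<le> 0" using assms by (intro mult_nonneg_nonpos) auto
      then show ?thesis using h1 h2 h4 by (simp add: distrib_left)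
    qed
  next
    case False
    then have u1: "1 \<le> u" by simp
    have J1: "((\<lambda>t. t powr (1/\<alpha> - 2)) has_integral ((u powr (1/\<alpha> - 2 + 1) - 1 powr (1/\<alpha> - 2 + 1)) / (1/\<alpha> - 2 + 1))) {1..u}"
      by (rule powr_has_integral[OF _ u1 ne2]) simp
    have J2: "((\<lambda>t. t powr (1/\<alpha> - 4)) has_integral ((T powr (1/\<alpha> - 4 + 1) - u powr (1/\<alpha> - 4 + 1)) / (1/\<alpha> - 4 + 1))) {u..T}"
      by (rule powr_has_integral[OF _ _ ne4]) (use u1 uT T_def in auto)
    have L1: "1 / (8 * u ^ 2) * ((u powr (1/\<alpha> - 2 + 1) - 1 powr (1/\<alpha> - 2 + 1)) / (1/\<alpha> - 2 + 1)) \<le> integral {1..u} (gf \<alpha> u)"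
      by (rule integral_lb[OF assms(1) u0 _ u1 _ _ J1]) (use u1 uT T_def gf_lb1[OF assms(1)] in auto)
    have L2: "1 / 8 * ((T powr (1/\<alpha> - 4 + 1) - u powr (1/\<alpha> - 4 + 1)) / (1/\<alpha> - 4 + 1)) \<le> integral {u..T} (gf \<alpha> u)"
      by (rule integral_lb[OF assms(1) u0 _ _ _ _ J2]) (use u1 uT T_def gf_lb2[OF assms(1)] in auto)
    have S: "integral {1..u} (gf \<alpha> u) + integral {u..T} (gf \<alpha> u) \<le> integral {0..T} (gf \<alpha> u)"
      using integral_sub_le[OF assms(1) u0, of 1 u T M] u1 uT T_def by auto
    have up: "0 < u" using u1 by simp
    have eu: "u * u powr (1/\<alpha> - 1) = u powr (1/\<alpha>)"
      using up by (simp add: powr_diff)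
    have A: "u ^ 3 * (1 / (8 * u ^ 2) * ((u powr (1/\<alpha> - 2 + 1) - 1 powr (1/\<alpha> - 2 + 1)) / (1/\<alpha> - 2 + 1)))
        = \<alpha> / 8 * ((u powr (1/\<alpha>) - u) / (1 - \<alpha>))"
    proof -
      have "u ^ 3 * (1 / (8 * u ^ 2) * ((u powr (1/\<alpha> - 2 + 1) - 1 powr (1/\<alpha> - 2 + 1)) / (1/\<alpha> - 2 + 1)))
          = u / 8 * (u powr (1/\<alpha> - 1) - 1) * (1 / (1/\<alpha> - 1))"
        using up by (simp add: power2_eq_square power3_eq_cube)
      also have "\<dots> = \<alpha> / 8 * ((u * u powr (1/\<alpha> - 1) - u) / (1 - \<alpha>))"
        unfolding k1 by (simp add: field_simps)
      finally show ?thesis unfolding eu .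
    qed
    have B: "u ^ 3 * (1 / 8 * ((T powr (1/\<alpha> - 4 + 1) - u powr (1/\<alpha> - 4 + 1)) / (1/\<alpha> - 4 + 1)))
        = \<alpha> / 8 * (u ^ 3 * (real M powr (1 - 3*\<alpha>) - max u 1 powr (1/\<alpha> - 3)) / (1 - 3*\<alpha>))"
    proof -
      have "max u 1 = u" using u1 by simp
      moreover have "1/\<alpha> - 4 + 1 = 1/\<alpha> - 3" by simp
      moreover have "\<alpha> \<noteq> 0" "8 - \<alpha> * 24 \<noteq> 0" "1 - \<alpha> * 3 \<noteq> 0" using assms by auto
      ultimately show ?thesis using eT by (simp add: field_simps)
    qed
    have "u ^ 3 * (1 / (8 * u ^ 2) * ((u powr (1/\<alpha> - 2 + 1) - 1 powr (1/\<alpha> - 2 + 1)) / (1/\<alpha> - 2 + 1)))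
        + u ^ 3 * (1 / 8 * ((T powr (1/\<alpha> - 4 + 1) - u powr (1/\<alpha> - 4 + 1)) / (1/\<alpha> - 4 + 1)))
        \<le> u ^ 3 * integral {0..T} (gf \<alpha> u)"
      using L1 L2 S up unfolding distrib_left[symmetric] by (intro mult_left_mono) auto
    then have "\<alpha> / 8 * ((u powr (1/\<alpha>) - u) / (1 - \<alpha>)) + \<alpha> / 8 * (u ^ 3 * (real M powr (1 - 3*\<alpha>) - max u 1 powr (1/\<alpha> - 3)) / (1 - 3*\<alpha>))
        \<le> u ^ 3 * integral {0..T} (gf \<alpha> u)" using A B by linarith
    then show ?thesis unfolding IM_gf T_def by (simp only: distrib_left)
  qed
qed


lemma part3:
  assumes "\<alpha> = 1/3"
  shows "\<exists>C>0. \<forall>M::nat. \<forall>u::real. 1 \<le> M \<longrightarrow> 0 \<le> u \<longrightarrow> u \<le> tseq \<alpha> M \<longrightarrow>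
            IM \<alpha> M u \<ge> C * u ^ 3 * ln (tseq \<alpha> M / max u 1)"
proof (intro exI[of _ "1 / 8"] conjI allI impI)
  show "(0::real) < 1 / 8" by simp
  have a0: "0 < \<alpha>" using assms by simp
  have p: "1/\<alpha> - 4 = -1" unfolding assms by simp
  have lb2: "1 / 8 * t powr (-1) \<le> gf \<alpha> u t" if "1 \<le> t" "0 \<le> u" "u \<le> t" for t u
    using gf_lb2[OF a0 that] unfolding p .
  fix M :: nat and u :: real
  assume M: "1 \<le> M" and u0: "0 \<le> u" and uT: "u \<le> tseq \<alpha> M"
  define T where "T = tseq \<alpha> M"
  have T1: "1 \<le> T" unfolding T_def using tseq_ge1[OF a0 M] .
  show "1 / 8 * u ^ 3 * ln (tseq \<alpha> M / max u 1) \<le> IM \<alpha> M u"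
  proof (cases "u \<le> 1")
    case True
    have J: "((\<lambda>t. t powr (-1)) has_integral (ln T - ln 1)) {1..T}"
      by (rule powr_m1_has_integral[OF _ T1]) simp
    have "1 / 8 * (ln T - ln 1) \<le> integral {1..T} (gf \<alpha> u)"
      by (rule integral_lb[OF a0 u0 _ T1 _ _ J]) (use True u0 T1 T_def lb2 in auto)
    also have "\<dots> \<le> integral {0..T} (gf \<alpha> u)"
      using integral_sub_le1[OF a0 u0, of 1 T M] T1 T_def by auto
    finally have "u ^ 3 * (1 / 8 * ln T) \<le> u ^ 3 * integral {0..T} (gf \<alpha> u)"
      using u0 by (intro mult_left_mono) auto
    moreover have "max u 1 = 1" using True by simp
    ultimately show ?thesis unfolding IM_gf T_def by simp
  next
    case False
    then have u1: "1 \<le> u" by simp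
    have J1: "((\<lambda>t. t powr (-1)) has_integral (ln u - ln 1)) {1..u}"
      by (rule powr_m1_has_integral[OF _ u1]) simp
    have J2: "((\<lambda>t. t powr (-1)) has_integral (ln T - ln u)) {u..T}"
      by (rule powr_m1_has_integral) (use u1 uT T_def in auto)
    have L1: "0 * (ln u - ln 1) \<le> integral {1..u} (gf \<alpha> u)"
      by (rule integral_lb[OF a0 u0 _ u1 _ _ J1]) (use u1 uT T_def gf_nonneg in auto)
    have L2: "1 / 8 * (ln T - ln u) \<le> integral {u..T} (gf \<alpha> u)"
      by (rule integral_lb[OF a0 u0 _ _ _ _ J2]) (use u1 uT T_def lb2 in auto)
    have S: "integral {1..u} (gf \<alpha> u) + integral {u..T} (gf \<alpha> u) \<le> integral {0..T} (gf \<alpha> u)"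
      using integral_sub_le[OF a0 u0, of 1 u T M] u1 uT T_def by auto
    have "1 / 8 * ln (T / u) \<le> integral {0..T} (gf \<alpha> u)"
      using L1 L2 S u1 T1 by (simp add: ln_div)
    then have "u ^ 3 * (1 / 8 * ln (T / u)) \<le> u ^ 3 * integral {0..T} (gf \<alpha> u)"
      using u0 by (intro mult_left_mono) auto
    moreover have "max u 1 = u" using u1 by simp
    ultimately show ?thesis unfolding IM_gf T_def by simp
  qed
qed

theorem lemma2p2:
  fixes \<alpha> :: real
  assumes "0 < \<alpha>" and "\<alpha> \<le> 1/3"
  shows "(\<exists>C>0. \<forall>M::nat. \<forall>u::real. 1 \<le> M \<longrightarrow> tseq \<alpha> M \<le> u \<longrightarrow>
            IM \<alpha> M u \<ge> C * u * (real M powr (1 - \<alpha>) - 1))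
       \<and> (\<alpha> < 1/3 \<longrightarrow> (\<exists>C>0. \<forall>M::nat. \<forall>u::real. 1 \<le> M \<longrightarrow> 0 \<le> u \<longrightarrow> u \<le> tseq \<alpha> M \<longrightarrow>
            IM \<alpha> M u \<ge> C * ((u powr (1/\<alpha>) - u) / (1 - \<alpha>)
              + u ^ 3 * (real M powr (1 - 3*\<alpha>) - max u 1 powr (1/\<alpha> - 3)) / (1 - 3*\<alpha>))))
       \<and> (\<alpha> = 1/3 \<longrightarrow> (\<exists>C>0. \<forall>M::nat. \<forall>u::real. 1 \<le> M \<longrightarrow> 0 \<le> u \<longrightarrow> u \<le> tseq \<alpha> M \<longrightarrow>
            IM \<alpha> M u \<ge> C * u ^ 3 * ln (tseq \<alpha> M / max u 1)))"
  using part1[OF assms] part2[OF assms(1)] part3 by blast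

end
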